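(* Let $m, n_0, n_1$ be positive integers and $n(\lambda) = n_0 + n_1\lambda$. If nonzero polynomials $x(\lambda), y(\lambda), z(\lambda) \in \mathbb{Q}[\lambda]$ satisfy $$\frac{m}{n(\lambda)} = \frac{1}{x(\lambda)} + \frac{1}{y(\lambda)} + \frac{1}{z(\lambda)}$$ identically, then at least one of $x, y, z$ has degree $1$.
   Context: $\lambda$ is an indeterminate; the equation is an identity of rational functions in $\lambda$. *)

theory Defs
  imports "HOL-Computational_Algebra.Polynomial_Factorial"
begin

end

theory Submission
  imports Defs
begin

lemma L3:
  fixes x y z N :: "rat poly" and r :: rat
  assumes "r \<noteq> 0" "degree N = 1" "degree x \<ge> 2" "degree y \<ge> 2" "degree z \<ge> 2"
    and E: "[:r:] * (x*y*z) = N * (y*z+x*z+x*y)"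
  shows False
proof -
  have nz: "x \<noteq> 0" "y \<noteq> 0" "z \<noteq> 0" using assms by auto
  define k where "k = degree x + degree y + degree z - 2"
  have dl: "degree ([:r:] * (x*y*z)) = degree x + degree y + degree z"
    using nz assms(1) by (simp add: degree_mult_eq)
  have a1: "degree (y*z) \<le> k" using nz assms(3) unfolding k_def by (simp add: degree_mult_eq)
  have a2: "degree (x*z) \<le> k" using nz assms(4) unfolding k_def by (simp add: degree_mult_eq)
  have a3: "degree (x*y) \<le> k" using nz assms(5) unfolding k_def by (simp add: degree_mult_eq)
  have ds: "degree (y*z+x*z+x*y) \<le> k"
    by (intro degree_add_le a1 a2 a3)
  have "degree (N * (y*z+x*z+x*y)) \<le> degree N + degree (y*z+x*z+x*y)"
    by (rule degree_mult_le)
  also have "\<dots> \<le> 1 + k" using ds assms(2) by simp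
  finally have "degree (N * (y*z+x*z+x*y)) \<le> 1 + k" .
  then have "degree ([:r:] * (x*y*z)) \<le> 1 + k" using E by simp
  then show False using dl assms(3-5) unfolding k_def by linarith
qed

lemma L2:
  fixes y z N :: "rat poly" and r u :: rat
  assumes "r \<noteq> 0" "degree N = 1" "u \<noteq> 0" "degree y \<ge> 2" "degree z \<ge> 2"
    and E: "[:r:] * ([:u:]*y*z) = N * (y*z+[:u:]*z+[:u:]*y)"
  shows False
proof -
  have nz: "y \<noteq> 0" "z \<noteq> 0" "N \<noteq> 0" using assms by auto
  have E2: "([:r*u:] - N) * (y*z) = (N*[:u:]) * (y+z)"
    using E by (simp add: algebra_simps smult_add_left smult_add_right)
  have d1: "degree ([:r*u:] - N) = 1" using assms(2)
    by (simp only: diff_conv_add_uminus, subst degree_add_eq_right) auto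
  hence "[:r*u:] - N \<noteq> 0" by auto
  hence dl: "degree (([:r*u:] - N) * (y*z)) = 1 + degree y + degree z"
    using nz d1 by (simp add: degree_mult_eq)
  have dN: "degree (N*[:u:]) = 1" using assms nz by (simp add: degree_mult_eq)
  have "degree ((N*[:u:]) * (y+z)) \<le> degree (N*[:u:]) + degree (y+z)"
    by (rule degree_mult_le)
  hence "degree ((N*[:u:]) * (y+z)) \<le> 1 + degree (y+z)" using dN by simp
  moreover have "degree (y+z) \<le> max (degree y) (degree z)" by (rule degree_add_le_max)
  ultimately show False using dl E2 assms by (simp add: max_def split: if_splits)
qed

lemma L1:
  fixes z N :: "rat poly" and r u v :: rat
  assumes "r \<noteq> 0" "degree N = 1" "u \<noteq> 0" "v \<noteq> 0" "degree z \<ge> 2"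
    and E: "[:r:] * ([:u:]*[:v:]*z) = N * ([:v:]*z+[:u:]*z+[:u:]*[:v:])"
  shows False
proof -
  have nz: "z \<noteq> 0" "N \<noteq> 0" using assms by auto
  have E2: "([:r*u*v:] - N*[:u+v:]) * z = N*[:u*v:]"
    using E by (simp add: algebra_simps smult_add_left smult_add_right)
  have dr: "degree (N*[:u*v:]) = 1" using assms by (simp add: degree_mult_eq)
  show False
  proof (cases "u + v = 0")
    case True
    then have "[:r*u*v:]*z = N*[:u*v:]" using E2 by simp
    then have "degree ([:r*u*v:]*z) = degree (N*[:u*v:])" by simp
    then show ?thesis using dr assms by (simp add: degree_mult_eq)
  next
    case False
    have dd: "degree (N*[:u+v:]) = 1" using assms(2) False nz by (simp add: degree_mult_eq)
    have d1: "degree ([:r*u*v:] - N*[:u+v:]) = 1" using dd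
      by (simp only: diff_conv_add_uminus, subst degree_add_eq_right) auto
    hence "[:r*u*v:] - N*[:u+v:] \<noteq> 0" by auto
    hence "degree (([:r*u*v:] - N*[:u+v:]) * z) = 1 + degree z" using d1 nz by (simp add: degree_mult_eq)
    then show ?thesis using E2 dr assms by simp
  qed
qed

lemma L0:
  fixes N :: "rat poly" and r u v w :: rat
  assumes "r \<noteq> 0" "degree N = 1" "u \<noteq> 0" "v \<noteq> 0" "w \<noteq> 0"
    and E: "[:r:] * ([:u:]*[:v:]*[:w:]) = N * ([:v:]*[:w:]+[:u:]*[:w:]+[:u:]*[:v:])"
  shows False
proof -
  have E2: "[:r*u*v*w:] = N * [:v*w+u*w+u*v:]" using E by (simp add: algebra_simps smult_add_left smult_add_right)
  show False
  proof (cases "v*w+u*w+u*v = 0")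
    case True then show ?thesis using E2 assms by simp
  next
    case False
    then have "degree (N * [:v*w+u*w+u*v:]) = 1" using assms by (simp add: degree_mult_eq)
    then show ?thesis using E2 by (metis degree_pCons_0 zero_neq_one)
  qed
qed

lemma const_or2:
  fixes x :: "rat poly"
  assumes "x \<noteq> 0" "degree x \<noteq> 1"
  obtains u where "u \<noteq> 0" "x = [:u:]" | "degree x \<ge> 2"
proof (cases "degree x = 0")
  case True
  then have "x = [:coeff x 0:]" by (metis degree_0_id)
  with assms that show ?thesis by (metis pCons_0_0)
next
  case False then show ?thesis using assms that by linarith
qed

theorem lemma1:
  fixes m n0 n1 :: nat and x y z :: "rat poly"
  assumes "m > 0" and "n0 > 0" and "n1 > 0"
    and "x \<noteq> 0" and "y \<noteq> 0" and "z \<noteq> 0"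
    and "to_fract [:of_nat m:] / to_fract [:of_nat n0, of_nat n1:]
         = 1 / to_fract x + 1 / to_fract y + 1 / to_fract z"
  shows "degree x = 1 \<or> degree y = 1 \<or> degree z = 1"
proof (rule ccontr)
  assume H: "\<not> (degree x = 1 \<or> degree y = 1 \<or> degree z = 1)"
  define N :: "rat poly" where "N = [:of_nat n0, of_nat n1:]"
  define r :: rat where "r = of_nat m"
  have r0: "r \<noteq> 0" using assms(1) by (simp add: r_def)
  have dN: "degree N = 1" using assms(3) by (simp add: N_def)
  have N0: "N \<noteq> 0" using dN by auto
  have "to_fract [:r:] / to_fract N = 1 / to_fract x + 1 / to_fract y + 1 / to_fract z"
    using assms(7) by (simp add: N_def r_def)
  then have "to_fract [:r:] * (to_fract x * to_fract y * to_fract z)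
     = to_fract N * (to_fract y * to_fract z + to_fract x * to_fract z + to_fract x * to_fract y)"
    using assms(4-6) N0 by (simp add: field_simps)
  then have "to_fract ([:r:] * (x*y*z)) = to_fract (N * (y*z+x*z+x*y))"
    by (simp only: to_fract_mult to_fract_add)
  then have E: "[:r:] * (x*y*z) = N * (y*z+x*z+x*y)" by (simp only: to_fract_eq_iff)
  from H have hx: "degree x \<noteq> 1" and hy: "degree y \<noteq> 1" and hz: "degree z \<noteq> 1" by auto
  show False
  proof (cases rule: const_or2[OF assms(4) hx])
    case (1 u)
    show False
    proof (cases rule: const_or2[OF assms(5) hy])
      case (1 v)
      show False
      proof (cases rule: const_or2[OF assms(6) hz])
        case (1 w)
        show False by (rule L0[OF r0 dN \<open>u\<noteq>0\<close> \<open>v\<noteq>0\<close> \<open>w\<noteq>0\<close>])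
           (use E \<open>x=_\<close> \<open>y=_\<close> \<open>z=_\<close> in simp)
      next
        case 2
        show False by (rule L1[OF r0 dN \<open>u\<noteq>0\<close> \<open>v\<noteq>0\<close> 2])
           (use E \<open>x=_\<close> \<open>y=_\<close> in simp)
      qed
    next
      case 2 note A2 = this
      show False
      proof (cases rule: const_or2[OF assms(6) hz])
        case (1 w)
        show False by (rule L1[OF r0 dN \<open>u\<noteq>0\<close> \<open>w\<noteq>0\<close> 2])
           (use E \<open>x=_\<close> \<open>z=_\<close> in \<open>simp add: ac_simps\<close>)
      next
        case 2 note B2 = this
        show False by (rule L2[OF r0 dN \<open>u\<noteq>0\<close> A2 B2])
           (use E \<open>x=_\<close> in \<open>simp add: ac_simps\<close>)
      qed
    qed
  next
    case 2 note A2 = this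
    show False
    proof (cases rule: const_or2[OF assms(5) hy])
      case (1 v)
      show False
      proof (cases rule: const_or2[OF assms(6) hz])
        case (1 w)
        show False by (rule L1[OF r0 dN \<open>v\<noteq>0\<close> \<open>w\<noteq>0\<close> 2])
           (use E \<open>y=_\<close> \<open>z=_\<close> in \<open>simp add: ac_simps\<close>)
      next
        case 2 note B2 = this
        show False by (rule L2[OF r0 dN \<open>v\<noteq>0\<close> A2 B2])
           (use E \<open>y=_\<close> in \<open>simp add: ac_simps\<close>)
      qed
    next
      case 2 note B2 = this
      show False
      proof (cases rule: const_or2[OF assms(6) hz])
        case (1 w)
        show False by (rule L2[OF r0 dN \<open>w\<noteq>0\<close> A2 B2])
           (use E \<open>z=_\<close> in \<open>simp add: ac_simps\<close>)
      next
        case 2 note B3 = this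
        show False by (rule L3[OF r0 dN A2 B2 B3 E])
      qed
    qed
  qed
qed
end
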